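(* Let $\varepsilon>0$, $\rho>0$, $T\in\mathbb{N}^*$, let $w$ be a real random variable and $\mathbf{a}=(a_t)_{0\le t\le T}\in\mathbb{R}^{T+1}$ with $a_0\ne0$. Let $K>0$ be such that $|a_t|\le(K\rho)^t|a_0|$ for all $t\in\{0,\ldots,T-1\}$, $|a_T+\varepsilon|\le(K\rho)^T|a_0|$ and $|a_T-\varepsilon|\le(K\rho)^T|a_0|$. Then \[\mathbb{P}(|f(\mathbf{a},\rho w)|\ge\varepsilon)\ge\mathbb{P}(|w|\ge2K),\] where $f(\mathbf{a},\rho w)=\sum_{t=0}^Ta_{T-t}(\rho w)^t$. *)

theory Defs
  imports "HOL-Probability.Probability"
begin

definition poly_f :: "nat \<Rightarrow> (nat \<Rightarrow> real) \<Rightarrow> real \<Rightarrow> real" where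
  "poly_f T a x = (\<Sum>t = 0..T. a (T - t) * x ^ t)"

end

theory Submission
  imports Defs
begin

lemma geomS:
  fixes c L :: real
  assumes "c > 0" "L \<ge> 2 * c"
  shows "(\<Sum>t<T. c ^ (T - t) * L ^ t) \<le> L ^ T - c ^ T"
proof (induction T)
  case 0
  then show ?case by simp
next
  case (Suc T)
  have "(\<Sum>t<Suc T. c ^ (Suc T - t) * L ^ t) = c * (\<Sum>t<T. c ^ (T - t) * L ^ t) + c * L ^ T"
    by (simp add: sum_distrib_left Suc_diff_le mult.assoc)
  also have "\<dots> \<le> c * (L ^ T - c ^ T) + c * L ^ T"
    using Suc assms by simp
  also have "\<dots> \<le> L ^ Suc T - c ^ Suc T"
  proof -
    have "L \<ge> 0" using assms by simp
    hence "2 * c * L ^ T \<le> L * L ^ T" using assms by (intro mult_right_mono) auto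
    thus ?thesis by (simp add: algebra_simps)
  qed
  finally show ?case .
qed

lemma sign_lemma:
  fixes b :: "nat \<Rightarrow> real" and c x :: real
  assumes "c > 0" "\<bar>x\<bar> \<ge> 2 * c" "b 0 \<noteq> 0"
    and bnd: "\<forall>j\<in>{1..T}. \<bar>b j\<bar> \<le> c ^ j * \<bar>b 0\<bar>"
  shows "poly_f T b x * (b 0 * x ^ T) > 0"
proof -
  define L where "L = \<bar>x\<bar>"
  define P where "P = b 0 * x ^ T"
  define R where "R = (\<Sum>t<T. b (T - t) * x ^ t)"
  have "{0..T} = insert T {..<T}" by auto
  hence f: "poly_f T b x = P + R" unfolding poly_f_def P_def R_def by simp
  have "\<bar>R\<bar> \<le> (\<Sum>t<T. \<bar>b (T - t) * x ^ t\<bar>)" unfolding R_def by (rule sum_abs)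
  also have "\<dots> \<le> (\<Sum>t<T. \<bar>b 0\<bar> * (c ^ (T - t) * L ^ t))"
  proof (rule sum_mono)
    fix t assume "t \<in> {..<T}"
    hence "T - t \<in> {1..T}" by auto
    hence "\<bar>b (T - t)\<bar> \<le> c ^ (T - t) * \<bar>b 0\<bar>" using bnd by blast
    thus "\<bar>b (T - t) * x ^ t\<bar> \<le> \<bar>b 0\<bar> * (c ^ (T - t) * L ^ t)"
    proof -
      have "\<bar>b (T - t)\<bar> * L ^ t \<le> (c ^ (T - t) * \<bar>b 0\<bar>) * L ^ t"
        using \<open>\<bar>b (T - t)\<bar> \<le> _\<close> unfolding L_def by (intro mult_right_mono) auto
      thus ?thesis unfolding L_def by (simp add: abs_mult power_abs algebra_simps)
    qed
  qed
  also have "\<dots> = \<bar>b 0\<bar> * (\<Sum>t<T. c ^ (T - t) * L ^ t)" by (simp add: sum_distrib_left)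
  also have "\<dots> \<le> \<bar>b 0\<bar> * (L ^ T - c ^ T)"
    using geomS[OF assms(1), of L T] assms(2) unfolding L_def by (intro mult_left_mono) auto
  also have "\<dots> < \<bar>b 0\<bar> * L ^ T" using assms by simp
  also have "\<dots> = \<bar>P\<bar>" unfolding P_def L_def by (simp add: abs_mult power_abs)
  finally have RP: "\<bar>R\<bar> < \<bar>P\<bar>" .
  have "P * R \<ge> - (\<bar>P\<bar> * \<bar>R\<bar>)" by (metis abs_ge_minus_self abs_mult minus_le_iff)
  moreover have "\<bar>P\<bar> * \<bar>R\<bar> < \<bar>P\<bar> * \<bar>P\<bar>" using RP by (intro mult_strict_left_mono) auto
  moreover have "\<bar>P\<bar> * \<bar>P\<bar> = P * P" by (simp add: abs_mult_self_eq)
  ultimately have "P * (P + R) > 0" by (simp add: algebra_simps)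
  thus ?thesis using f P_def by (simp add: mult.commute)
qed

lemma shift_eq:
  assumes "T \<ge> 1"
  shows "poly_f T (a(T := a T - e)) x = poly_f T a x - e"
proof -
  have "poly_f T (a(T := a T - e)) x = (\<Sum>t = 0..T. a (T - t) * x ^ t - (if t = 0 then e else 0))"
    unfolding poly_f_def
  proof (rule sum.cong)
    fix t assume "t \<in> {0..T}"
    thus "(a(T := a T - e)) (T - t) * x ^ t = a (T - t) * x ^ t - (if t = 0 then e else 0)"
      using assms by (auto simp: algebra_simps)
  qed simp
  also have "\<dots> = poly_f T a x - e" unfolding poly_f_def by (simp add: sum_subtractf)
  finally show ?thesis .
qed

theorem mainTheorem16:
  fixes M :: "'s measure" and w :: "'s \<Rightarrow> real" and a :: "nat \<Rightarrow> real"
    and \<epsilon> \<rho> K :: real and T :: nat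
  assumes "prob_space M"
    and "w \<in> borel_measurable M"
    and "\<epsilon> > 0" and "\<rho> > 0" and "T \<ge> 1"
    and "a 0 \<noteq> 0"
    and "K > 0"
    and "\<forall>t \<in> {0..T-1}. \<bar>a t\<bar> \<le> (K * \<rho>) ^ t * \<bar>a 0\<bar>"
    and "\<bar>a T + \<epsilon>\<bar> \<le> (K * \<rho>) ^ T * \<bar>a 0\<bar>"
    and "\<bar>a T - \<epsilon>\<bar> \<le> (K * \<rho>) ^ T * \<bar>a 0\<bar>"
  shows "measure M {x \<in> space M. \<bar>poly_f T a (\<rho> * w x)\<bar> \<ge> \<epsilon>}
           \<ge> measure M {x \<in> space M. \<bar>w x\<bar> \<ge> 2 * K}"
proof -
  interpret prob_space M by fact
  have pt: "\<bar>poly_f T a y\<bar> \<ge> \<epsilon>" if y: "\<bar>y\<bar> \<ge> 2 * (K * \<rho>)" for y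
  proof -
    have sg: "(poly_f T a y - e) * (a 0 * y ^ T) > 0"
      if "\<bar>a T - e\<bar> \<le> (K * \<rho>) ^ T * \<bar>a 0\<bar>" for e
    proof -
      have "\<forall>j\<in>{1..T}. \<bar>(a(T := a T - e)) j\<bar> \<le> (K * \<rho>) ^ j * \<bar>(a(T := a T - e)) 0\<bar>"
      proof
        fix j assume j: "j \<in> {1..T}"
        show "\<bar>(a(T := a T - e)) j\<bar> \<le> (K * \<rho>) ^ j * \<bar>(a(T := a T - e)) 0\<bar>"
        proof (cases "j = T")
          case True thus ?thesis using that j by auto
        next
          case False
          hence "j \<in> {0..T-1}" using j by auto
          thus ?thesis using False j assms(8) by auto
        qed
      qed
      moreover have "(a(T := a T - e)) 0 = a 0" using assms(5) by simp
      ultimately have "poly_f T (a(T := a T - e)) y * (a 0 * y ^ T) > 0"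
        using sign_lemma[of "K*\<rho>" y "a(T := a T - e)" T] assms y by auto
      thus "(poly_f T a y - e) * (a 0 * y ^ T) > 0" using shift_eq[OF assms(5)] by simp
    qed
    have s1: "(poly_f T a y - \<epsilon>) * (a 0 * y ^ T) > 0" using sg assms(10) by blast
    have s2: "(poly_f T a y - (-\<epsilon>)) * (a 0 * y ^ T) > 0" using sg[of "-\<epsilon>"] assms(9) by simp
    show ?thesis
    proof (cases "a 0 * y ^ T > 0")
      case True
      with s1 have "poly_f T a y - \<epsilon> > 0" by (simp add: zero_less_mult_iff)
      thus ?thesis by simp
    next
      case False
      have "\<And>u P::real. 0 < u * P \<Longrightarrow> \<not> P > 0 \<Longrightarrow> u < 0"
        by (metis mult_nonneg_nonpos not_le not_less_iff_gr_or_eq mult_zero_right)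
      from this[OF s2 False] have "poly_f T a y + \<epsilon> < 0" by simp
      thus ?thesis by simp
    qed
  qed
  have sub: "{x \<in> space M. \<bar>w x\<bar> \<ge> 2 * K} \<subseteq> {x \<in> space M. \<bar>poly_f T a (\<rho> * w x)\<bar> \<ge> \<epsilon>}"
  proof safe
    fix x assume "x \<in> space M" "2 * K \<le> \<bar>w x\<bar>"
    hence "\<bar>\<rho> * w x\<bar> \<ge> 2 * (K * \<rho>)" using assms(4)
      by (simp add: abs_mult mult.commute mult.left_commute mult_right_mono)
    thus "\<epsilon> \<le> \<bar>poly_f T a (\<rho> * w x)\<bar>" by (rule pt)
  qed
  have meas: "{x \<in> space M. \<bar>poly_f T a (\<rho> * w x)\<bar> \<ge> \<epsilon>} \<in> sets M"
    using assms(2) unfolding poly_f_def by measurable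
  show ?thesis by (rule finite_measure_mono[OF sub meas])
qed

end
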